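(* Let $\lambda\in\mathbb R$. The connected Lie subgroups of dimension two of $S_{3,\lambda}$ are exactly the following: (i) $\mathcal K_0=\{(x,y,0):x,y\in\mathbb R\}$, with Lie algebra $\operatorname{span}\{E_1,E_2\}$ (abelian); (ii) if $\lambda\neq0$: for each $a\in\mathbb R$, $\mathcal J_a=\{(x,\tfrac{e^{\lambda z}-1}{\lambda}a,z):x,z\in\mathbb R\}$, with Lie algebra $\operatorname{span}\{E_3+aE_2,E_1\}$, which is solvable and non-abelian; (iii) if $\lambda=0$: for each $a\in\mathbb R$, $\mathcal J_a=\{(x,az,z):x,z\in\mathbb R\}$, with Lie algebra $\operatorname{span}\{E_3+aE_2,E_1\}$, which is abelian.
   Context: For $\lambda\in\mathbb R$, $S_{3,\lambda}$ is $\mathbb R^3=\{(x,y,z)\}$ with product $(v_1,z_1)(v_2,z_2)=(v_1+M_{\lambda,z_1}v_2,\,z_1+z_2)$, where $v_i=(x_i,y_i)\in\mathbb R^2$ and $M_{\lambda,z}=\begin{pmatrix}e^{\lambda z}& ze^{\lambda z}\\ 0& e^{\lambda z}\end{pmatrix}$. Its Lie algebra $\mathfrak r_{3,\lambda}$ has basis of left-invariant vector fields $E_1=e^{\lambda z}\partial_x$, $E_2=ze^{\lambda z}\partial_x+e^{\lambda z}\partial_y$, $E_3=\partial_z$, with nonzero brackets $[E_3,E_1]=\lambda E_1$, $[E_3,E_2]=E_1+\lambda E_2$ ($\lambda=0$ gives the Heisenberg group). *)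

theory Defs
  imports "HOL-Analysis.Analysis"
begin

type_synonym pt = "real \<times> real \<times> real"

text \<open>The group S_{3,l}: (v1,z1)(v2,z2) = (v1 + M_{l,z1} v2, z1+z2),
  M_{l,z} = [[e^{lz}, z e^{lz}],[0, e^{lz}]].\<close>
definition smul :: "real \<Rightarrow> pt \<Rightarrow> pt \<Rightarrow> pt" where
  "smul l p q = (case p of (x1,y1,z1) \<Rightarrow> case q of (x2,y2,z2) \<Rightarrow>
     (x1 + exp (l*z1) * x2 + z1 * exp (l*z1) * y2, y1 + exp (l*z1) * y2, z1 + z2))"

definition sinv :: "real \<Rightarrow> pt \<Rightarrow> pt" where
  "sinv l p = (case p of (x,y,z) \<Rightarrow>
     (- exp (-(l*z)) * (x - z*y), - exp (-(l*z)) * y, -z))"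

definition ssubgroup :: "real \<Rightarrow> pt set \<Rightarrow> bool" where
  "ssubgroup l H \<longleftrightarrow> 0 \<in> H \<and> (\<forall>p\<in>H. \<forall>q\<in>H. smul l p q \<in> H) \<and> (\<forall>p\<in>H. sinv l p \<in> H)"

definition gen_subgroup :: "real \<Rightarrow> pt set \<Rightarrow> pt set" where
  "gen_subgroup l S = \<Inter> {H. ssubgroup l H \<and> S \<subseteq> H}"

text \<open>Left-invariant vector field X_v with X_v(0) = v: X_v(p) = d/dt (p \<cdot> t v) at t = 0.
  Thus E1 = lvf l (1,0,0), E2 = lvf l (0,1,0), E3 = lvf l (0,0,1).\<close>
definition lvf :: "real \<Rightarrow> pt \<Rightarrow> pt \<Rightarrow> pt" where
  "lvf l v p = vector_derivative (\<lambda>t. smul l p (t *\<^sub>R v)) (at 0)"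

definition vf_bracket :: "(pt \<Rightarrow> pt) \<Rightarrow> (pt \<Rightarrow> pt) \<Rightarrow> pt \<Rightarrow> pt" where
  "vf_bracket X Y p = frechet_derivative Y (at p) (X p) - frechet_derivative X (at p) (Y p)"

text \<open>A Lie subalgebra of r_{3,l}, identified with a subspace V of the tangent space at 0
  (v \<leftrightarrow> X_v).\<close>
definition lie_subalg :: "real \<Rightarrow> pt set \<Rightarrow> bool" where
  "lie_subalg l V \<longleftrightarrow> subspace V \<and>
     (\<forall>v\<in>V. \<forall>w\<in>V. \<exists>u\<in>V. vf_bracket (lvf l v) (lvf l w) = lvf l u)"

definition lie_abelian :: "real \<Rightarrow> pt set \<Rightarrow> bool" where
  "lie_abelian l V \<longleftrightarrow> (\<forall>v\<in>V. \<forall>w\<in>V. vf_bracket (lvf l v) (lvf l w) = (\<lambda>p. 0))"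

fun derived :: "real \<Rightarrow> pt set \<Rightarrow> nat \<Rightarrow> pt set" where
  "derived l V 0 = V"
| "derived l V (Suc k) = span {u. \<exists>v\<in>derived l V k. \<exists>w\<in>derived l V k.
      vf_bracket (lvf l v) (lvf l w) = lvf l u}"

definition lie_solvable :: "real \<Rightarrow> pt set \<Rightarrow> bool" where
  "lie_solvable l V \<longleftrightarrow> (\<exists>k. derived l V k = {0})"

definition one_param :: "real \<Rightarrow> (real \<Rightarrow> pt) \<Rightarrow> pt \<Rightarrow> bool" where
  "one_param l \<gamma> v \<longleftrightarrow> (\<forall>s t. \<gamma> (s + t) = smul l (\<gamma> s) (\<gamma> t)) \<and>
     (\<gamma> has_vector_derivative v) (at 0)"

definition exp_image :: "real \<Rightarrow> pt set \<Rightarrow> pt set" where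
  "exp_image l V = {\<gamma> t | \<gamma> v t. v \<in> V \<and> one_param l \<gamma> v}"

text \<open>The connected Lie subgroup with Lie algebra V (subgroup generated by exp(V)).\<close>
definition lie_subgroup_of :: "real \<Rightarrow> pt set \<Rightarrow> pt set" where
  "lie_subgroup_of l V = gen_subgroup l (exp_image l V)"

definition conn_lie_subgroup2 :: "real \<Rightarrow> pt set \<Rightarrow> bool" where
  "conn_lie_subgroup2 l H \<longleftrightarrow>
     (\<exists>V. lie_subalg l V \<and> dim V = 2 \<and> H = lie_subgroup_of l V)"

definition K0 :: "pt set" where
  "K0 = {(x, y, 0) | x y. True}"

definition J :: "real \<Rightarrow> real \<Rightarrow> pt set" where
  "J l a = (if l \<noteq> 0 then {(x, (exp (l*z) - 1) / l * a, z) | x z. True}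
            else {(x, a*z, z) | x z. True})"

end

theory Submission
  imports Defs
begin

lemma lvf_eq: "lvf l v p = (exp (l * snd (snd p)) * (fst v + snd (snd p) * fst (snd v)),
   exp (l * snd (snd p)) * fst (snd v), snd (snd v))"
proof -
  obtain x y z where p: "p = (x,y,z)" by (cases p) auto
  obtain a b c where v: "v = (a,b,c)" by (cases v) auto
  have e: "(\<lambda>t. smul l p (t *\<^sub>R v)) = (\<lambda>t. (x + exp (l*z) * (t*a) + z * exp (l*z) * (t*b), y + exp (l*z) * (t*b), z + t*c))"
    by (simp add: p v smul_def)
  have "((\<lambda>t. smul l p (t *\<^sub>R v)) has_vector_derivative (exp (l*z) * a + z * exp (l*z) * b, exp (l*z) * b, c)) (at 0)"
    unfolding e
    apply (intro has_vector_derivative_Pair)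
    apply (simp_all add: has_real_derivative_iff_has_vector_derivative[symmetric])
    apply (auto intro!: derivative_eq_intros)
    done
  then show ?thesis unfolding lvf_def using vector_derivative_at p v by (simp add: algebra_simps)
qed

definition brk :: "real \<Rightarrow> pt \<Rightarrow> pt \<Rightarrow> pt" where
  "brk l v w = (let al = snd (snd v) * fst w - snd (snd w) * fst v;
                    be = snd (snd v) * fst (snd w) - snd (snd w) * fst (snd v)
                in (l * al + be, l * be, 0))"

definition Gd :: "real \<Rightarrow> pt \<Rightarrow> real \<Rightarrow> pt" where
  "Gd l w z = (l * exp (l*z) * (fst w + z * fst (snd w)) + exp (l*z) * fst (snd w), l * exp (l*z) * fst (snd w), 0)"

lemma lvf_deriv: "(lvf l w has_derivative (\<lambda>h. snd (snd h) *\<^sub>R Gd l w (snd (snd p)))) (at p)"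
proof -
  obtain a b c where v: "w = (a,b,c)" by (cases w) auto
  define G where "G = (\<lambda>z. (exp (l * z) * (a + z * b), exp (l * z) * b, c))"
  have e: "lvf l w = G \<circ> (\<lambda>p. snd (snd p))"
    by (auto simp: lvf_eq G_def v fun_eq_iff)
  have G: "(G has_vector_derivative Gd l w z) (at z)" for z
    unfolding G_def Gd_def v
    apply (intro has_vector_derivative_Pair)
    apply (simp_all add: has_real_derivative_iff_has_vector_derivative[symmetric])
    apply (auto intro!: derivative_eq_intros simp: algebra_simps)
    done
  have s: "((\<lambda>p::pt. snd (snd p)) has_derivative (\<lambda>p. snd (snd p))) (at p)"
    by (intro derivative_intros)
  show ?thesis unfolding e
    using diff_chain_at[OF s G[unfolded has_vector_derivative_def]]
    by (simp add: o_def)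
qed

lemma bracket_eq: "vf_bracket (lvf l v) (lvf l w) = lvf l (brk l v w)"
proof
  fix p :: pt
  show "vf_bracket (lvf l v) (lvf l w) p = lvf l (brk l v w) p"
    unfolding vf_bracket_def frechet_derivative_at[OF lvf_deriv, symmetric]
    by (simp add: lvf_eq brk_def Gd_def Let_def algebra_simps)
qed

lemma lvf_inj: "lvf l u = lvf l w \<Longrightarrow> u = w"
proof -
  assume "lvf l u = lvf l w"
  then have "lvf l u 0 = lvf l w 0" by simp
  then show "u = w" by (simp add: lvf_eq prod_eq_iff)
qed

lemma lvf_zero_iff: "lvf l u = (\<lambda>p. 0) \<longleftrightarrow> u = 0"
proof
  assume "lvf l u = (\<lambda>p. 0)"
  then have "lvf l u 0 = 0" by simp
  then show "u = 0" by (simp add: lvf_eq prod_eq_iff)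
qed (simp add: lvf_eq fun_eq_iff zero_prod_def)

lemma smul_comp:
  "fst (smul l p q) = fst p + exp (l * snd (snd p)) * fst q + snd (snd p) * exp (l * snd (snd p)) * fst (snd q)"
  "fst (snd (smul l p q)) = fst (snd p) + exp (l * snd (snd p)) * fst (snd q)"
  "snd (snd (smul l p q)) = snd (snd p) + snd (snd q)"
  by (cases p; cases q; simp add: smul_def)+

lemma vd_comp:
  assumes "(g has_vector_derivative v) (at x)"
  shows "((\<lambda>t. snd (snd (g t))) has_real_derivative snd (snd v)) (at x)"
    "((\<lambda>t. fst (snd (g t))) has_real_derivative fst (snd v)) (at x)"
    "((\<lambda>t. fst (g t)) has_real_derivative fst v) (at x)"
proof -
  have d: "(g has_derivative (\<lambda>h. h *\<^sub>R v)) (at x)" using assms by (simp add: has_vector_derivative_def)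
  show "((\<lambda>t. snd (snd (g t))) has_real_derivative snd (snd v)) (at x)"
    unfolding has_real_derivative_iff_has_vector_derivative has_vector_derivative_def
    using has_derivative_snd[OF has_derivative_snd[OF d]] by simp
  show "((\<lambda>t. fst (snd (g t))) has_real_derivative fst (snd v)) (at x)"
    unfolding has_real_derivative_iff_has_vector_derivative has_vector_derivative_def
    using has_derivative_fst[OF has_derivative_snd[OF d]] by simp
  show "((\<lambda>t. fst (g t)) has_real_derivative fst v) (at x)"
    unfolding has_real_derivative_iff_has_vector_derivative has_vector_derivative_def
    using has_derivative_fst[OF d] by simp
qed

lemma op_Z:
  assumes "one_param l g v"
  shows "snd (snd (g t)) = snd (snd v) * t"
proof -
  define Z where "Z = (\<lambda>t. snd (snd (g t)))"
  define c where "c = snd (snd v)"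
  have add: "Z (s + t) = Z s + Z t" for s t
    using assms unfolding one_param_def Z_def by (simp add: smul_comp)
  have D0: "(Z has_real_derivative c) (at 0)"
    using vd_comp(1)[of g v 0] assms unfolding one_param_def Z_def c_def by simp
  have D: "(Z has_real_derivative c) (at t)" for t
  proof -
    have e: "(\<lambda>x. Z (x + t)) = (\<lambda>x. Z t + Z x)" using add by (auto simp: fun_eq_iff add.commute)
    have "((\<lambda>x. Z (x + t)) has_real_derivative c) (at 0)"
      unfolding e using D0 by (auto intro!: derivative_eq_intros)
    then show ?thesis using DERIV_shift[of Z c 0 t] by simp
  qed
  have z0: "Z 0 = 0" using add[of 0 0] by simp
  have "(\<lambda>t. Z t - c * t) t = (\<lambda>t. Z t - c * t) 0"
    by (rule DERIV_isconst_all) (auto intro!: derivative_eq_intros D)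
  then show ?thesis using z0 by (simp add: Z_def c_def mult.commute)
qed

lemma op_Y:
  assumes "one_param l g v"
    and g0: "h 0 = 0"
    and hd: "\<And>t. (h has_real_derivative fst (snd v) * exp (l * snd (snd v) * t)) (at t)"
  shows "fst (snd (g t)) = h t"
proof -
  define Y where "Y = (\<lambda>t. fst (snd (g t)))"
  define b where "b = fst (snd v)"
  have add: "Y (s + t) = Y s + exp (l * (snd (snd v) * s)) * Y t" for s t
    using assms(1) op_Z[OF assms(1), of s] unfolding one_param_def Y_def by (simp add: smul_comp)
  have D0: "(Y has_real_derivative b) (at 0)"
    using vd_comp(2)[of g v 0] assms unfolding one_param_def Y_def b_def by simp
  have D: "(Y has_real_derivative b * exp (l * snd (snd v) * t)) (at t)" for t
  proof -
    have e: "(\<lambda>x. Y (x + t)) = (\<lambda>x. Y t + exp (l * (snd (snd v) * t)) * Y x)"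
      using add[of t] by (simp add: fun_eq_iff add.commute)
    have "((\<lambda>x. Y (x + t)) has_real_derivative b * exp (l * snd (snd v) * t)) (at 0)"
      unfolding e using D0 by (auto intro!: derivative_eq_intros simp: algebra_simps)
    then show ?thesis using DERIV_shift[of Y _ 0 t] by simp
  qed
  have y0: "Y 0 = 0" using add[of 0 0] by simp
  have "(\<lambda>t. Y t - h t) t = (\<lambda>t. Y t - h t) 0"
    by (rule DERIV_isconst_all) (auto intro!: derivative_eq_intros D hd simp: b_def)
  then show ?thesis using y0 g0 by (simp add: Y_def)
qed

lemma spanP: "span {(1,0,0), (0,1,0)} = {p::pt. snd (snd p) = 0}"
proof
  show "span {(1,0,0), (0,1,0)} \<subseteq> {p::pt. snd (snd p) = 0}"
    by (rule span_minimal) (auto simp: subspace_def)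
  show "{p::pt. snd (snd p) = 0} \<subseteq> span {(1,0,0), (0,1,0)}"
  proof
    fix p :: pt assume "p \<in> {p. snd (snd p) = 0}"
    then have p: "p = fst p *\<^sub>R (1,0,0) + fst (snd p) *\<^sub>R (0,1,0)" by (cases p) auto
    show "p \<in> span {(1,0,0), (0,1,0)}"
      by (subst p, intro span_add span_scale span_base) auto
  qed
qed

lemma spanJ: "span {(0,a,1), (1,0,0)} = {p::pt. fst (snd p) = a * snd (snd p)}"
proof
  show "span {(0,a,1), (1,0,0)} \<subseteq> {p::pt. fst (snd p) = a * snd (snd p)}"
    by (rule span_minimal) (auto simp: subspace_def algebra_simps)
  show "{p::pt. fst (snd p) = a * snd (snd p)} \<subseteq> span {(0,a,1), (1,0,0)}"
  proof
    fix p :: pt assume "p \<in> {p. fst (snd p) = a * snd (snd p)}"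
    then have p: "p = snd (snd p) *\<^sub>R (0,a,1) + fst p *\<^sub>R (1,0,0)" by (cases p) auto
    show "p \<in> span {(0,a,1), (1,0,0)}"
      by (subst p, intro span_add span_scale span_base) auto
  qed
qed

lemma dimP: "dim (span {(1::real,0::real,0::real), (0,1,0)}) = 2"
proof -
  have "independent {(1::real,0::real,0::real), (0,1,0)}"
    by (auto simp: independent_insert span_singleton zero_prod_def)
  then show ?thesis by (simp add: dim_eq_card_independent)
qed

lemma dimJ: "dim (span {(0::real,a,1::real), (1,0,0)}) = 2"
proof -
  have "independent {(0::real,a,1::real), (1,0,0)}"
    by (auto simp: independent_insert span_singleton zero_prod_def)
  then show ?thesis by (simp add: dim_eq_card_independent)
qed

definition Jf :: "real \<Rightarrow> real \<Rightarrow> real \<Rightarrow> real" where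
  "Jf l a z = (if l \<noteq> 0 then (exp (l*z) - 1) / l * a else a*z)"

definition Xf :: "real \<Rightarrow> real \<Rightarrow> real \<Rightarrow> real" where
  "Xf l a t = (if l \<noteq> 0 then a * (t * exp (l*t) / l - (exp (l*t) - 1) / l^2) else a * t^2 / 2)"

lemma K0_eq: "K0 = {p. snd (snd p) = 0}"
  by (auto simp: K0_def)

lemma J_eq: "J l a = {p. fst (snd p) = Jf l a (snd (snd p))}"
  by (auto simp: J_def Jf_def)

lemma K0_sub: "ssubgroup l K0"
  by (auto simp: ssubgroup_def K0_eq smul_comp sinv_def split: prod.splits)

lemma J_sub: "ssubgroup l (J l a)"
proof -
  have m: "fst (snd (smul l p q)) = Jf l a (snd (snd (smul l p q)))"
    if "fst (snd p) = Jf l a (snd (snd p))" "fst (snd q) = Jf l a (snd (snd q))" for p q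
  proof (cases "l = 0")
    case True then show ?thesis using that by (simp add: smul_comp Jf_def algebra_simps)
  next
    case False
    have k: "(e1-1)/l*a + e1*((e2-1)/l*a) = (e1*e2-1)/l*a" for e1 e2
      using False by (simp add: field_simps)
    show ?thesis using that False k by (simp add: smul_comp Jf_def distrib_left exp_add)
  qed
  have i: "fst (snd (sinv l p)) = Jf l a (snd (snd (sinv l p)))"
    if "fst (snd p) = Jf l a (snd (snd p))" for p
  proof -
    obtain x y z where p: "p = (x,y,z)" by (cases p) auto
    have e: "exp (- (l * z)) * exp (l * z) = 1" by (simp add: exp_minus)
    show ?thesis
    proof (cases "l = 0")
      case True then show ?thesis using that unfolding p by (simp add: sinv_def Jf_def)
    next
      case False
      have k: "- ei * ((e - 1) / l * a) = (ei - 1) / l * a" if "ei * e = 1" for e ei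
        using False that by (simp add: field_simps)
      show ?thesis using that False k[OF e] unfolding p by (simp add: sinv_def Jf_def)
    qed
  qed
  show ?thesis unfolding ssubgroup_def J_eq using m i by (auto simp: Jf_def)
qed

lemma one_param_c1: "one_param l (\<lambda>t. (t,0,0)) (1,0,0)"
  unfolding one_param_def
  apply (auto simp: smul_def)
  apply (intro has_vector_derivative_Pair)
  apply (simp_all add: has_real_derivative_iff_has_vector_derivative[symmetric])
  done

lemma one_param_c2: "one_param l (\<lambda>t. (0,t,0)) (0,1,0)"
  unfolding one_param_def
  apply (auto simp: smul_def)
  apply (intro has_vector_derivative_Pair)
  apply (simp_all add: has_real_derivative_iff_has_vector_derivative[symmetric])
  done

lemma one_param_cJ: "one_param l (\<lambda>t. (Xf l a t, Jf l a t, t)) (0,a,1)"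
  unfolding one_param_def
proof (intro conjI allI)
  fix s t
  show "(Xf l a (s + t), Jf l a (s + t), s + t) = smul l (Xf l a s, Jf l a s, s) (Xf l a t, Jf l a t, t)"
  proof (cases "l = 0")
    case True then show ?thesis by (simp add: smul_def Xf_def Jf_def algebra_simps power2_eq_square)
  next
    case False
    have k: "a*(s*Es/l - (Es-1)/l^2) + Es*(a*(t*Et/l - (Et-1)/l^2)) + s*Es*((Et-1)/l*a)
       = a*((s+t)*(Es*Et)/l - (Es*Et-1)/l^2)"
     and k2: "(Es - 1) / l * a + Es * ((Et - 1) / l * a) = (Es*Et-1)/l*a" for Es Et
      using False by (simp_all add: field_simps power2_eq_square)
    show ?thesis using False k k2 by (simp add: smul_def Xf_def Jf_def distrib_left exp_add)
  qed
  show "((\<lambda>t. (Xf l a t, Jf l a t, t)) has_vector_derivative (0, a, 1)) (at 0)"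
  proof (cases "l = 0")
    case True
    show ?thesis unfolding Xf_def Jf_def True
      apply (intro has_vector_derivative_Pair)
      apply (simp_all add: has_real_derivative_iff_has_vector_derivative[symmetric])
      apply (auto intro!: derivative_eq_intros)
      done
  next
    case False
    show ?thesis unfolding Xf_def Jf_def using False
      apply (intro has_vector_derivative_Pair)
      apply (simp_all add: has_real_derivative_iff_has_vector_derivative[symmetric])
      apply (auto intro!: derivative_eq_intros)
      apply (simp add: field_simps eval_nat_numeral)
      done
  qed
qed


lemma gen_smul:
  assumes "p \<in> exp_image l V" "q \<in> exp_image l V"
  shows "smul l p q \<in> gen_subgroup l (exp_image l V)"
  using assms unfolding gen_subgroup_def ssubgroup_def by blast

lemma gen_le:
  assumes "ssubgroup l H" "exp_image l V \<subseteq> H"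
  shows "gen_subgroup l (exp_image l V) \<subseteq> H"
  using assms unfolding gen_subgroup_def by blast


lemma LK0: "lie_subgroup_of l (span {(1,0,0), (0,1,0)}) = K0"
proof
  show "lie_subgroup_of l (span {(1,0,0), (0,1,0)}) \<subseteq> K0"
    unfolding lie_subgroup_of_def
  proof (rule gen_le[OF K0_sub])
    show "exp_image l (span {(1, 0, 0), (0, 1, 0)}) \<subseteq> K0"
    proof
      fix p assume "p \<in> exp_image l (span {(1, 0, 0), (0, 1, 0)})"
      then obtain g v t where p: "p = g t" and v: "snd (snd v) = 0" and g: "one_param l g v"
        unfolding exp_image_def spanP by blast
      show "p \<in> K0" unfolding K0_eq p using op_Z[OF g, of t] v by simp
    qed
  qed
  show "K0 \<subseteq> lie_subgroup_of l (span {(1,0,0), (0,1,0)})"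
  proof
    fix p assume "p \<in> K0"
    then obtain x y where p: "p = (x,y,0)" by (auto simp: K0_def)
    have a: "(x,0,0) \<in> exp_image l (span {(1,0,0), (0,1,0)})"
      unfolding exp_image_def mem_Collect_eq
      apply (rule exI[of _ "\<lambda>t. (t,0,0)"], rule exI[of _ "(1,0,0)"], rule exI[of _ "x"])
      using one_param_c1[of l] by (simp add: span_base)
    have b: "(0,y,0) \<in> exp_image l (span {(1,0,0), (0,1,0)})"
      unfolding exp_image_def mem_Collect_eq
      apply (rule exI[of _ "\<lambda>t. (0,t,0)"], rule exI[of _ "(0,1,0)"], rule exI[of _ "y"])
      using one_param_c2[of l] by (simp add: span_base)
    have "p = smul l (x,0,0) (0,y,0)" by (simp add: p smul_def)
    then show "p \<in> lie_subgroup_of l (span {(1,0,0), (0,1,0)})"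
      unfolding lie_subgroup_of_def using gen_smul[OF a b] by simp
  qed
qed

lemma LJ: "lie_subgroup_of l (span {(0,a,1), (1,0,0)}) = J l a"
proof
  show "lie_subgroup_of l (span {(0,a,1), (1,0,0)}) \<subseteq> J l a"
    unfolding lie_subgroup_of_def
  proof (rule gen_le[OF J_sub])
    show "exp_image l (span {(0,a,1), (1,0,0)}) \<subseteq> J l a"
    proof
      fix p assume "p \<in> exp_image l (span {(0,a,1), (1,0,0)})"
      then obtain g v t where p: "p = g t" and v: "fst (snd v) = a * snd (snd v)" and g: "one_param l g v"
        unfolding exp_image_def spanJ by blast
      define c where "c = snd (snd v)"
      have z: "snd (snd (g t)) = c * t" using op_Z[OF g] c_def by simp
      have y: "fst (snd (g t)) = Jf l a (c * t)"
      proof (rule op_Y[OF g, of "\<lambda>t. Jf l a (c * t)"])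
        show "Jf l a (c * 0) = 0" by (simp add: Jf_def)
        fix t
        show "((\<lambda>t. Jf l a (c * t)) has_real_derivative fst (snd v) * exp (l * snd (snd v) * t)) (at t)"
          unfolding Jf_def v c_def[symmetric]
          by (cases "l = 0") (auto intro!: derivative_eq_intros)
      qed
      show "p \<in> J l a" unfolding J_eq p using z y by simp
    qed
  qed
  show "J l a \<subseteq> lie_subgroup_of l (span {(0,a,1), (1,0,0)})"
  proof
    fix p assume "p \<in> J l a"
    then obtain x z where p: "p = (x, Jf l a z, z)" by (cases p) (auto simp: J_eq)
    have a: "(x - Xf l a z,0,0) \<in> exp_image l (span {(0,a,1), (1,0,0)})"
      unfolding exp_image_def mem_Collect_eq
      apply (rule exI[of _ "\<lambda>t. (t,0,0)"], rule exI[of _ "(1,0,0)"], rule exI[of _ "x - Xf l a z"])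
      using one_param_c1[of l] by (simp add: span_base)
    have b: "(Xf l a z, Jf l a z, z) \<in> exp_image l (span {(0,a,1), (1,0,0)})"
      unfolding exp_image_def mem_Collect_eq
      apply (rule exI[of _ "\<lambda>t. (Xf l a t, Jf l a t, t)"], rule exI[of _ "(0,a,1)"], rule exI[of _ "z"])
      using one_param_cJ[of l a] by (simp add: span_base)
    have "p = smul l (x - Xf l a z,0,0) (Xf l a z, Jf l a z, z)" by (simp add: p smul_def)
    then show "p \<in> lie_subgroup_of l (span {(0,a,1), (1,0,0)})"
      unfolding lie_subgroup_of_def using gen_smul[OF a b] by simp
  qed
qed

lemma brk_in_V:
  assumes "lie_subalg l V" "v \<in> V" "w \<in> V"
  shows "brk l v w \<in> V"
proof -
  obtain u where "u \<in> V" "vf_bracket (lvf l v) (lvf l w) = lvf l u"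
    using assms unfolding lie_subalg_def by blast
  then show ?thesis using lvf_inj bracket_eq by metis
qed

lemma classify:
  assumes L: "lie_subalg l V" and D: "dim V = 2"
  shows "V = span {(1,0,0), (0,1,0)} \<or> (\<exists>a. V = span {(0,a,1), (1,0,0)})"
proof -
  have S: "subspace V" using L by (simp add: lie_subalg_def)
  show ?thesis
  proof (cases "\<forall>p\<in>V. snd (snd p) = 0")
    case True
    have "V = span {(1,0,0), (0,1,0)}"
      by (rule subspace_dim_equal[OF S subspace_span]) (use True D dimP in \<open>auto simp: spanP\<close>)
    then show ?thesis by blast
  next
    case False
    then obtain p0 where p0: "p0 \<in> V" "snd (snd p0) \<noteq> 0" by blast
    define v where "v = (1 / snd (snd p0)) *\<^sub>R p0"
    have vV: "v \<in> V" unfolding v_def using S p0 by (simp add: subspace_scale)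
    have v3: "snd (snd v) = 1" using p0 by (simp add: v_def)
    show ?thesis
    proof (cases "\<forall>w\<in>V. snd (snd w) = 0 \<longrightarrow> w = 0")
      case True
      have "V \<subseteq> span {v}"
      proof
        fix x assume x: "x \<in> V"
        have "x - snd (snd x) *\<^sub>R v \<in> V" using S x vV by (meson subspace_diff subspace_scale)
        moreover have "snd (snd (x - snd (snd x) *\<^sub>R v)) = 0" using v3 by simp
        ultimately have "x = snd (snd x) *\<^sub>R v" using True by auto
        then show "x \<in> span {v}" by (metis span_base span_scale singletonI)
      qed
      then have "dim V \<le> card {v}" by (intro dim_le_card) auto
      then show ?thesis using D by simp
    next
      case False
      then obtain w where wV: "w \<in> V" and w3: "snd (snd w) = 0" and w0: "w \<noteq> 0" by blast
      define s where "s = fst w"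
      define t where "t = fst (snd w)"
      have wst: "w = (s, t, 0)" using w3 by (simp add: s_def t_def prod_eq_iff)
      have uV: "brk l v w \<in> V" using brk_in_V[OF L vV wV] .
      have u: "brk l v w = (l * s + t, l * t, 0)" using v3 wst by (simp add: brk_def Let_def)
      show ?thesis
      proof (cases "t = 0")
        case False
        have "(1/t) *\<^sub>R (brk l v w - l *\<^sub>R w) \<in> V" using S uV wV by (meson subspace_diff subspace_scale)
        moreover have "(1/t) *\<^sub>R (brk l v w - l *\<^sub>R w) = (1,0,0)" unfolding u using False by (simp add: wst zero_prod_def)
        ultimately have e1: "(1,0,0) \<in> V" by simp
        have "(1/t) *\<^sub>R (w - s *\<^sub>R (1,0,0)) \<in> V" using S e1 wV by (meson subspace_diff subspace_scale)
        moreover have "(1/t) *\<^sub>R (w - s *\<^sub>R (1,0,0)) = (0,1,0)" using False by (simp add: wst)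
        ultimately have e2: "(0,1,0) \<in> V" by simp
        have "v - fst v *\<^sub>R (1,0,0) - fst (snd v) *\<^sub>R (0,1,0) \<in> V" using S e1 e2 vV by (meson subspace_diff subspace_scale)
        moreover have "v - fst v *\<^sub>R (1,0,0) - fst (snd v) *\<^sub>R (0,1,0) = (0,0,1)" using v3 by (simp add: prod_eq_iff)
        ultimately have e3: "(0,0,1) \<in> V" by simp
        have "V = UNIV"
        proof (rule set_eqI, rule iffI)
          fix p :: pt
          have "fst p *\<^sub>R (1,0,0) + fst (snd p) *\<^sub>R (0,1,0) + snd (snd p) *\<^sub>R (0,0,1) \<in> V"
            using S e1 e2 e3 by (simp add: subspace_add subspace_scale del: scaleR_Pair)
          moreover have "fst p *\<^sub>R (1,0,0) + fst (snd p) *\<^sub>R (0,1,0) + snd (snd p) *\<^sub>R (0,0,1) = p"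
            by (simp add: prod_eq_iff)
          ultimately show "p \<in> V" by simp
        qed simp
        then have "dim V = 3" by (simp add: Basis_prod_def card_Un_disjoint)
        then show ?thesis using D by simp
      next
        case True
        then have s0: "s \<noteq> 0" using w0 wst by (auto simp: zero_prod_def)
        have "(1/s) *\<^sub>R w \<in> V" using S wV by (simp add: subspace_scale)
        moreover have "(1/s) *\<^sub>R w = (1,0,0)" using s0 True by (simp add: wst)
        ultimately have e1: "(1,0,0) \<in> V" by simp
        have "v - fst v *\<^sub>R (1,0,0) \<in> V" using S e1 vV by (meson subspace_diff subspace_scale)
        moreover have "v - fst v *\<^sub>R (1,0,0) = (0, fst (snd v), 1)" using v3 by (simp add: prod_eq_iff)
        ultimately have ea: "(0, fst (snd v), 1) \<in> V" by simp
        have sub: "span {(0, fst (snd v), 1), (1,0,0)} \<subseteq> V"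
          by (rule span_minimal) (use e1 ea S in auto)
        have "span {(0, fst (snd v), 1), (1,0,0)} = V"
          by (rule subspace_dim_equal[OF subspace_span S sub]) (use D dimJ[of "fst (snd v)"] in simp)
        then show ?thesis by blast
      qed
    qed
  qed
qed

lemma subalgP: "lie_subalg l (span {(1,0,0), (0,1,0)})"
  unfolding lie_subalg_def
proof (intro conjI ballI subspace_span)
  fix v w :: pt assume "v \<in> span {(1,0,0), (0,1,0)}" "w \<in> span {(1,0,0), (0,1,0)}"
  show "\<exists>u\<in>span {(1,0,0), (0,1,0)}. vf_bracket (lvf l v) (lvf l w) = lvf l u"
    by (rule bexI[of _ "brk l v w"]) (auto simp: bracket_eq spanP brk_def Let_def)
qed

lemma abelP: "lie_abelian l (span {(1,0,0), (0,1,0)})"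
  unfolding lie_abelian_def bracket_eq lvf_zero_iff
  by (auto simp: spanP brk_def Let_def zero_prod_def)

lemma subalgJ: "lie_subalg l (span {(0,a,1), (1,0,0)})"
  unfolding lie_subalg_def
proof (intro conjI ballI subspace_span)
  fix v w :: pt assume "v \<in> span {(0,a,1), (1,0,0)}" "w \<in> span {(0,a,1), (1,0,0)}"
  then show "\<exists>u\<in>span {(0,a,1), (1,0,0)}. vf_bracket (lvf l v) (lvf l w) = lvf l u"
    by (intro bexI[of _ "brk l v w"]) (auto simp: bracket_eq spanJ brk_def Let_def)
qed

lemma abelJ0: "lie_abelian 0 (span {(0,a,1), (1,0,0)})"
  unfolding lie_abelian_def bracket_eq lvf_zero_iff
  by (auto simp: spanJ brk_def Let_def zero_prod_def)

lemma nabelJ: "l \<noteq> 0 \<Longrightarrow> \<not> lie_abelian l (span {(0,a,1), (1,0,0)})"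
  unfolding lie_abelian_def bracket_eq lvf_zero_iff
  apply (simp add: spanJ)
  apply (rule exI[of _ 0], rule exI[of _ 1], rule exI[of _ 1], rule exI[of _ 0])
  apply (auto simp: brk_def Let_def zero_prod_def)
  done

lemma solvJ: "lie_solvable l (span {(0,a,1), (1,0,0)})"
proof -
  let ?V = "span {(0,a,1), (1::real,0::real,0::real)}"
  have d1: "derived l ?V 1 \<subseteq> {p. fst (snd p) = 0 \<and> snd (snd p) = 0}"
    unfolding One_nat_def derived.simps
  proof (rule span_minimal)
    show "subspace {p::pt. fst (snd p) = 0 \<and> snd (snd p) = 0}" by (auto simp: subspace_def)
    show "{u. \<exists>v\<in>?V. \<exists>w\<in>?V. vf_bracket (lvf l v) (lvf l w) = lvf l u}
          \<subseteq> {p. fst (snd p) = 0 \<and> snd (snd p) = 0}"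
    proof
      fix u assume "u \<in> {u. \<exists>v\<in>?V. \<exists>w\<in>?V. vf_bracket (lvf l v) (lvf l w) = lvf l u}"
      then obtain v w where vw: "v \<in> ?V" "w \<in> ?V" "lvf l (brk l v w) = lvf l u"
        by (auto simp: bracket_eq)
      then have "u = brk l v w" using lvf_inj by metis
      then show "u \<in> {p. fst (snd p) = 0 \<and> snd (snd p) = 0}" using vw
        by (auto simp: spanJ brk_def Let_def)
    qed
  qed
  have "derived l ?V 2 = {0}"
  proof
    have "{u. \<exists>v\<in>derived l ?V 1. \<exists>w\<in>derived l ?V 1. vf_bracket (lvf l v) (lvf l w) = lvf l u} \<subseteq> {0}"
    proof
      fix u assume "u \<in> {u. \<exists>v\<in>derived l ?V 1. \<exists>w\<in>derived l ?V 1. vf_bracket (lvf l v) (lvf l w) = lvf l u}"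
      then obtain v w where vw: "v \<in> derived l ?V 1" "w \<in> derived l ?V 1" "lvf l (brk l v w) = lvf l u"
        by (auto simp: bracket_eq)
      then have "u = brk l v w" using lvf_inj by metis
      moreover have "v \<in> {p. fst (snd p) = 0 \<and> snd (snd p) = 0}" "w \<in> {p. fst (snd p) = 0 \<and> snd (snd p) = 0}"
        using d1 vw(1,2) by blast+
      ultimately show "u \<in> {0}" 
        by (auto simp: brk_def Let_def zero_prod_def)
    qed
    then have "span {u. \<exists>v\<in>derived l ?V 1. \<exists>w\<in>derived l ?V 1. vf_bracket (lvf l v) (lvf l w) = lvf l u} \<subseteq> {0}"
      by (rule span_minimal) simp
    then show "derived l ?V 2 \<subseteq> {0}" by (simp add: numeral_2_eq_2)
    show "{0} \<subseteq> derived l ?V 2" by (simp add: numeral_2_eq_2 span_zero)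
  qed
  then show ?thesis unfolding lie_solvable_def by blast
qed

theorem mainTheorem2:
  fixes l :: real
  shows "{H. conn_lie_subgroup2 l H} = {K0} \<union> range (J l)
    \<and> (\<forall>V. lie_subalg l V \<and> dim V = 2 \<longrightarrow>
          (V = span {(1,0,0), (0,1,0)} \<and> lie_subgroup_of l V = K0)
        \<or> (\<exists>a. V = span {(0,a,1), (1,0,0)} \<and> lie_subgroup_of l V = J l a))
    \<and> lie_subalg l (span {(1,0,0), (0,1,0)}) \<and> dim (span {(1::real,0::real,0::real), (0,1,0)}) = 2
    \<and> lie_subgroup_of l (span {(1,0,0), (0,1,0)}) = K0
    \<and> lie_abelian l (span {(1,0,0), (0,1,0)})
    \<and> (\<forall>a. lie_subalg l (span {(0,a,1), (1,0,0)}) \<and> dim (span {(0::real,a,1::real), (1,0,0)}) = 2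
          \<and> lie_subgroup_of l (span {(0,a,1), (1,0,0)}) = J l a
          \<and> (l \<noteq> 0 \<longrightarrow> lie_solvable l (span {(0,a,1), (1,0,0)}) \<and> \<not> lie_abelian l (span {(0,a,1), (1,0,0)}))
          \<and> (l = 0 \<longrightarrow> lie_abelian l (span {(0,a,1), (1,0,0)})))"
proof -
  have C: "(V = span {(1,0,0), (0,1,0)} \<and> lie_subgroup_of l V = K0)
        \<or> (\<exists>a. V = span {(0,a,1), (1,0,0)} \<and> lie_subgroup_of l V = J l a)"
    if "lie_subalg l V" "dim V = 2" for V
    using classify[OF that] LK0 LJ by blast
  have E: "{H. conn_lie_subgroup2 l H} = {K0} \<union> range (J l)"
  proof (rule set_eqI, rule iffI)
    fix H assume "H \<in> {H. conn_lie_subgroup2 l H}"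
    then obtain V where "lie_subalg l V" "dim V = 2" "H = lie_subgroup_of l V"
      by (auto simp: conn_lie_subgroup2_def)
    then show "H \<in> {K0} \<union> range (J l)" using C by blast
  next
    fix H assume "H \<in> {K0} \<union> range (J l)"
    then show "H \<in> {H. conn_lie_subgroup2 l H}"
    proof
      assume "H \<in> {K0}"
      then show ?thesis unfolding conn_lie_subgroup2_def mem_Collect_eq
        using subalgP[of l] dimP LK0[of l] by auto
    next
      assume "H \<in> range (J l)"
      then obtain a where "H = J l a" by auto
      then show ?thesis unfolding conn_lie_subgroup2_def mem_Collect_eq
        using subalgJ[of l a] dimJ[of a] LJ[of l a] by auto
    qed
  qed
  show ?thesis
  proof (intro conjI allI impI)
    fix a
    assume "l = 0"
    then show "lie_abelian l (span {(0,a,1), (1,0,0)})" using abelJ0 by simp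
  qed (use E C subalgP dimP LK0 abelP subalgJ dimJ LJ solvJ nabelJ in auto)
qed

end
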